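(* Let $n\ge1$ and let $T\in\mathcal{L}(\mathcal{H})$ be $n$-EP. Then $T$ has finite ascent and finite descent, and moreover $\mathrm{asc}(T)\le n$ and $\mathrm{dsc}(T)\le n$.
   Context: $\mathcal{H}$ is a Hilbert space, $\mathcal{L}(\mathcal{H})$ the bounded operators on it; $N(\cdot)$ and $R(\cdot)$ denote kernel and range. The ascent is $\mathrm{asc}(T)=\min\{k\in\mathbb{N}: N(T^k)=N(T^{k+1})\}$ and the descent is $\mathrm{dsc}(T)=\min\{k\in\mathbb{N}: R(T^k)=R(T^{k+1})\}$ (each is $\infty$ if no such $k$ exists). For $T$ with closed range, $T^\dagger$ is its Moore–Penrose inverse (unique solution of $TT^\dagger T=T$, $T^\dagger TT^\dagger=T^\dagger$, $(T^\dagger T)^*=T^\dagger T$, $(TT^\dagger)^*=TT^\dagger$). $T$ is $n$-EP if it has closed range and $T^nT^\dagger=T^\dagger T^n$. *)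

theory Defs
  imports "HOL-Analysis.Analysis" "HOL-Library.Extended_Nat"
begin

definition op_pow :: "('a::real_normed_vector \<Rightarrow>\<^sub>L 'a) \<Rightarrow> nat \<Rightarrow> 'a \<Rightarrow> 'a" where
  "op_pow T k = (blinfun_apply T ^^ k)"

definition kernel_op :: "('a::real_normed_vector \<Rightarrow> 'a) \<Rightarrow> 'a set" where
  "kernel_op f = {x. f x = 0}"

definition ascent :: "('a::real_normed_vector \<Rightarrow>\<^sub>L 'a) \<Rightarrow> enat" where
  "ascent T = (if \<exists>k. kernel_op (op_pow T k) = kernel_op (op_pow T (Suc k))
     then enat (LEAST k. kernel_op (op_pow T k) = kernel_op (op_pow T (Suc k))) else \<infinity>)"

definition descent :: "('a::real_normed_vector \<Rightarrow>\<^sub>L 'a) \<Rightarrow> enat" where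
  "descent T = (if \<exists>k. range (op_pow T k) = range (op_pow T (Suc k))
     then enat (LEAST k. range (op_pow T k) = range (op_pow T (Suc k))) else \<infinity>)"

definition is_mp_inverse :: "('a::real_inner \<Rightarrow>\<^sub>L 'a) \<Rightarrow> ('a \<Rightarrow>\<^sub>L 'a) \<Rightarrow> bool" where
  "is_mp_inverse T S \<longleftrightarrow>
     T o\<^sub>L S o\<^sub>L T = T \<and> S o\<^sub>L T o\<^sub>L S = S \<and>
     adjoint (blinfun_apply (S o\<^sub>L T)) = blinfun_apply (S o\<^sub>L T) \<and>
     adjoint (blinfun_apply (T o\<^sub>L S)) = blinfun_apply (T o\<^sub>L S)"

definition mp_inverse :: "('a::real_inner \<Rightarrow>\<^sub>L 'a) \<Rightarrow> ('a \<Rightarrow>\<^sub>L 'a)" where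
  "mp_inverse T = (THE S. is_mp_inverse T S)"

definition n_EP :: "nat \<Rightarrow> ('a::real_inner \<Rightarrow>\<^sub>L 'a) \<Rightarrow> bool" where
  "n_EP n T \<longleftrightarrow> closed (range (blinfun_apply T)) \<and>
     op_pow T n \<circ> blinfun_apply (mp_inverse T) = blinfun_apply (mp_inverse T) \<circ> op_pow T n"

end

theory Submission
  imports Defs
begin


lemma my_summable_Cauchy: "summable f \<longleftrightarrow> (\<forall>e>0. \<exists>N. \<forall>m\<ge>N. \<forall>n. norm (sum f {m..<n}) < e)" (is "_ = ?rhs")
  for f :: "nat \<Rightarrow> 'a::{real_normed_vector,complete_space}"
proof
  assume f: "summable f"
  show ?rhs
  proof clarify
    fix e :: real
    assume "0 < e"
    then obtain M where M: "\<And>m n. \<lbrakk>m\<ge>M; n\<ge>M\<rbrakk> \<Longrightarrow> norm (sum f {..<m} - sum f {..<n}) < e"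
      using f by (force simp add: summable_iff_convergent Cauchy_convergent_iff [symmetric] Cauchy_iff)
    have "norm (sum f {m..<n}) < e" if "m \<ge> M" for m n
    proof (cases m n rule: linorder_class.le_cases)
      assume "m \<le> n"
      then show ?thesis
        by (metis (mono_tags, opaque_lifting) M atLeast0LessThan order_trans sum_diff_nat_ivl that zero_le)
    next
      assume "n \<le> m"
      then show ?thesis
        by (simp add: \<open>0 < e\<close>)
    qed
    then show "\<exists>N. \<forall>m\<ge>N. \<forall>n. norm (sum f {m..<n}) < e"
      by blast
  qed
next
  assume r: ?rhs
  then show "summable f"
    unfolding summable_iff_convergent Cauchy_convergent_iff [symmetric] Cauchy_iff
  proof clarify
    fix e :: real
    assume "0 < e"
    with r obtain N where N: "\<And>m n. m \<ge> N \<Longrightarrow> norm (sum f {m..<n}) < e"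
      by blast
    have "norm (sum f {..<m} - sum f {..<n}) < e" if "m\<ge>N" "n\<ge>N" for m n
    proof (cases m n rule: linorder_class.le_cases)
      assume "m \<le> n"
      then show ?thesis
        by (metis N finite_lessThan lessThan_minus_lessThan lessThan_subset_iff norm_minus_commute sum_diff \<open>m\<ge>N\<close>)
    next
      assume "n \<le> m"
      then show ?thesis
        by (metis N finite_lessThan lessThan_minus_lessThan lessThan_subset_iff sum_diff \<open>n\<ge>N\<close>)
    qed
    then show "\<exists>M. \<forall>m\<ge>M. \<forall>n\<ge>M. norm (sum f {..<m} - sum f {..<n}) < e"
      by blast
  qed
qed

lemma my_summable_norm_cancel:
  fixes f :: "nat \<Rightarrow> 'a::{real_normed_vector,complete_space}"
  shows "summable (\<lambda>n. norm (f n)) \<Longrightarrow> summable f"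
  unfolding my_summable_Cauchy
  apply (erule all_forward imp_forward ex_forward | assumption)+
  apply (fastforce simp add: order_le_less_trans [OF norm_sum] order_le_less_trans [OF abs_ge_self])
  done

lemma my_summable_norm:
  fixes f :: "nat \<Rightarrow> 'a::{real_normed_vector,complete_space}"
  shows "summable (\<lambda>n. norm (f n)) \<Longrightarrow> norm (suminf f) \<le> (\<Sum>n. norm (f n))"
proof -
  assume s: "summable (\<lambda>n. norm (f n))"
  have s2: "summable f" by (rule my_summable_norm_cancel[OF s])
  have t1: "(\<lambda>n. norm (\<Sum>i<n. f i)) \<longlonglongrightarrow> norm (suminf f)"
    by (intro tendsto_norm summable_LIMSEQ[OF s2])
  have t2: "(\<lambda>n. \<Sum>i<n. norm (f i)) \<longlonglongrightarrow> (\<Sum>n. norm (f n))"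
    by (rule summable_LIMSEQ[OF s])
  show ?thesis by (rule LIMSEQ_le[OF t1 t2]) (auto intro: norm_sum)
qed




lemma parallelogram:
  fixes a b :: "'a::real_inner"
  shows "(norm (a - b))\<^sup>2 + (norm (a + b))\<^sup>2 = 2 * (norm a)\<^sup>2 + 2 * (norm b)\<^sup>2"
  by (simp add: power2_norm_eq_inner inner_diff_left inner_diff_right inner_add_left inner_add_right inner_commute)

lemma min_dist_exists:
  fixes M :: "'a::{real_inner,complete_space} set"
  assumes sub: "subspace M" and cl: "closed M"
  shows "\<exists>m\<in>M. \<forall>z\<in>M. norm (x - m) \<le> norm (x - z)"
proof -
  have ne: "M \<noteq> {}" using sub subspace_0 by blast
  define d where "d = infdist x M"
  have d0: "d \<ge> 0" unfolding d_def by (rule infdist_nonneg)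
  have dle: "d \<le> norm (x - z)" if "z \<in> M" for z
    using infdist_le[OF that, of x] by (simp add: d_def dist_norm)
  have "\<exists>m. m \<in> M \<and> norm (x - m) < d + 1 / real (Suc k)" for k
  proof -
    have "infdist x M < d + 1 / real (Suc k)" by (simp add: d_def)
    then obtain a where "a \<in> M" "dist x a < d + 1 / real (Suc k)"
    proof -
      have bb: "bdd_below ((\<lambda>a. dist x a) ` M)" by (rule bdd_belowI[of _ 0]) auto
      show ?thesis using \<open>infdist x M < _\<close> unfolding infdist_notempty[OF ne]
        using cINF_less_iff[OF ne bb] by (auto intro: that)
    qed
    then show ?thesis by (auto simp: dist_norm)
  qed
  then obtain m where mM: "\<And>k. m k \<in> M" and mlt: "\<And>k. norm (x - m k) < d + 1 / real (Suc k)"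
    by metis
  define e where "e k = 1 / real (Suc k)" for k
  have e0: "e k > 0" for k by (simp add: e_def)
  have e1: "e k \<le> 1" for k by (simp add: e_def)
  have sq: "(norm (x - m k))\<^sup>2 \<le> d\<^sup>2 + (2*d+1) * e k" for k
  proof -
    have "(norm (x - m k))\<^sup>2 \<le> (d + e k)\<^sup>2"
      using mlt[of k] by (intro power_mono) (auto simp: e_def)
    also have "\<dots> = d\<^sup>2 + 2*d*e k + e k * e k" by (simp add: power2_eq_square algebra_simps)
    also have "\<dots> \<le> d\<^sup>2 + (2*d+1) * e k" using e0[of k] e1[of k] by (simp add: algebra_simps)
    finally show ?thesis .
  qed
  have diff: "(norm (m i - m j))\<^sup>2 \<le> 2*(2*d+1) * (e i + e j)" for i j
  proof -
    have mid: "(1/2) *\<^sub>R (m i + m j) \<in> M"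
      using mM sub by (simp add: subspace_add subspace_scale)
    have "d \<le> norm (x - (1/2) *\<^sub>R (m i + m j))" by (rule dle[OF mid])
    hence "d\<^sup>2 \<le> (norm (x - (1/2) *\<^sub>R (m i + m j)))\<^sup>2" using d0 by (intro power_mono) auto
    moreover have "(x - m i) + (x - m j) = 2 *\<^sub>R (x - (1/2) *\<^sub>R (m i + m j))"
      by (simp add: algebra_simps scaleR_2)
    hence "(norm ((x - m i) + (x - m j)))\<^sup>2 = 4 * (norm (x - (1/2) *\<^sub>R (m i + m j)))\<^sup>2"
      by (simp add: power2_eq_square)
    moreover have "(x - m i) - (x - m j) = m j - m i" by simp
    moreover note parallelogram[of "x - m i" "x - m j"]
    moreover note sq[of i] sq[of j]
    moreover have "norm (m j - m i) = norm (m i - m j)" by (rule norm_minus_commute)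
    ultimately show ?thesis by (simp add: algebra_simps)
  qed
  have "Cauchy m"
  proof (rule metric_CauchyI)
    fix eps :: real assume "eps > 0"
    define K where "K = 4*(2*d+1)"
    have K0: "K > 0" using d0 by (simp add: K_def)
    obtain N where N: "K / eps\<^sup>2 < real N"
      using reals_Archimedean2 by blast
    have "dist (m i) (m j) < eps" if "i \<ge> N" "j \<ge> N" for i j
    proof -
      have ei: "e i \<le> 1 / real (Suc N)" and ej: "e j \<le> 1 / real (Suc N)"
        using that unfolding e_def by (auto intro!: divide_left_mono)
      have "2*(2*d+1) * (e i + e j) \<le> 2*(2*d+1) * (2 / real (Suc N))"
        using ei ej d0 by (intro mult_left_mono) auto
      also have "\<dots> = K / real (Suc N)" by (simp add: K_def)
      also have "\<dots> < eps\<^sup>2"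
      proof -
        have "K / eps\<^sup>2 < real (Suc N)" using N by simp
        hence "K < real (Suc N) * eps\<^sup>2" using \<open>eps>0\<close> by (simp add: divide_less_eq)
        thus ?thesis by (simp add: divide_less_eq mult.commute)
      qed
      finally have "(norm (m i - m j))\<^sup>2 < eps\<^sup>2" using diff[of i j] by simp
      hence "norm (m i - m j) < eps" using \<open>eps>0\<close> by (simp add: power_less_imp_less_base)
      thus ?thesis by (simp add: dist_norm)
    qed
    thus "\<exists>N. \<forall>i\<ge>N. \<forall>j\<ge>N. dist (m i) (m j) < eps" by blast
  qed
  then obtain l where l: "m \<longlonglongrightarrow> l" using Cauchy_convergent_iff convergent_def by blast
  have lM: "l \<in> M" using cl mM l closed_sequentially by blast
  have "norm (x - l) \<le> norm (x - z)" if "z \<in> M" for z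
  proof -
    have t1: "(\<lambda>k. norm (x - m k)) \<longlonglongrightarrow> norm (x - l)"
      by (intro tendsto_intros l)
    have "(\<lambda>k. d + 1 / real (Suc k)) \<longlonglongrightarrow> d + 0"
      by (intro tendsto_intros LIMSEQ_inverse_real_of_nat[unfolded inverse_eq_divide])
    hence t2: "(\<lambda>k. d + 1 / real (Suc k)) \<longlonglongrightarrow> d" by simp
    have "norm (x - l) \<le> d"
      using mlt by (intro LIMSEQ_le[OF t1 t2]) (auto intro: less_imp_le)
    thus ?thesis using dle[OF that] by simp
  qed
  thus ?thesis using lM by blast
qed




lemma orth_proj_exists:
  fixes M :: "'a::{real_inner,complete_space} set"
  assumes sub: "subspace M" and cl: "closed M"
  shows "\<exists>m\<in>M. \<forall>z\<in>M. (x - m) \<bullet> z = 0"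
proof -
  obtain m where mM: "m \<in> M" and mmin: "\<And>z. z \<in> M \<Longrightarrow> norm (x - m) \<le> norm (x - z)"
    using min_dist_exists[OF sub cl, of x] by blast
  have "(x - m) \<bullet> z = 0" if zM: "z \<in> M" for z
  proof -
    define c where "c = (x - m) \<bullet> z"
    define nz where "nz = z \<bullet> z"
    have nz0: "nz \<ge> 0" by (simp add: nz_def)
    define t where "t = c / (nz + 1)"
    have "m + t *\<^sub>R z \<in> M" using sub mM zM by (simp add: subspace_add subspace_scale)
    hence "norm (x - m) \<le> norm (x - (m + t *\<^sub>R z))" by (rule mmin)
    hence "(norm (x - m))\<^sup>2 \<le> (norm ((x - m) - t *\<^sub>R z))\<^sup>2"
      by (intro power_mono) (auto simp: algebra_simps)
    also have "(norm ((x - m) - t *\<^sub>R z))\<^sup>2 = (norm (x - m))\<^sup>2 - 2 * t * c + t * t * nz"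
      by (simp add: power2_norm_eq_inner inner_diff_left inner_diff_right c_def nz_def inner_commute algebra_simps)
    finally have "0 \<le> - 2 * t * c + t * t * nz" by simp
    hence "0 \<le> (nz+1) * (nz + 1) * (- 2 * t * c + t * t * nz)" using nz0 by simp
    also have "(nz+1) * (nz + 1) * (- 2 * t * c + t * t * nz) = - 2 * c * (t * (nz+1)) * (nz+1) + (t*(nz+1)) * (t*(nz+1)) * nz"
      by (simp add: algebra_simps)
    also have "t * (nz + 1) = c" using nz0 unfolding t_def by simp
    also have "- 2 * c * c * (nz+1) + c * c * nz = - c * c * (nz + 2)" by (simp add: algebra_simps)
    finally have "c * c * (nz + 2) \<le> 0" by simp
    moreover have "c * c \<ge> 0" by simp
    ultimately have "c * c = 0" using nz0
      by (metis add_nonneg_pos mult_le_0_iff order_antisym_conv zero_less_numeral not_le mult_pos_pos order.strict_iff_order)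
    thus ?thesis by (simp add: c_def)
  qed
  thus ?thesis using mM by blast
qed

definition pr :: "'a::{real_inner,complete_space} set \<Rightarrow> 'a \<Rightarrow> 'a" where
  "pr M x = (SOME m. m \<in> M \<and> (\<forall>z\<in>M. (x - m) \<bullet> z = 0))"

context
  fixes M :: "'a::{real_inner,complete_space} set"
  assumes sub: "subspace M" and cl: "closed M"
begin

lemma pr_spec: "pr M x \<in> M \<and> (\<forall>z\<in>M. (x - pr M x) \<bullet> z = 0)"
  unfolding pr_def by (rule someI_ex) (use orth_proj_exists[OF sub cl] in blast)

lemma pr_in: "pr M x \<in> M" using pr_spec by blast
lemma pr_orth: "z \<in> M \<Longrightarrow> (x - pr M x) \<bullet> z = 0" using pr_spec by blast

lemma pr_unique:
  assumes "m \<in> M" "\<And>z. z \<in> M \<Longrightarrow> (x - m) \<bullet> z = 0"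
  shows "pr M x = m"
proof -
  have d: "m - pr M x \<in> M" using assms(1) pr_in sub by (simp add: subspace_diff)
  have "(m - pr M x) \<bullet> (m - pr M x) = ((x - pr M x) - (x - m)) \<bullet> (m - pr M x)" by simp
  also have "\<dots> = 0" using pr_orth[OF d] assms(2)[OF d] by (simp add: inner_diff_left)
  finally show ?thesis by simp
qed

lemma pr_id: "x \<in> M \<Longrightarrow> pr M x = x" by (rule pr_unique) auto

lemma pr_zero: "(\<And>z. z \<in> M \<Longrightarrow> x \<bullet> z = 0) \<Longrightarrow> pr M x = 0"
  by (rule pr_unique) (auto simp: sub subspace_0)

lemma pr_add: "pr M (x + y) = pr M x + pr M y"
proof (rule pr_unique)
  show "pr M x + pr M y \<in> M" using sub pr_in by (simp add: subspace_add)
  fix z assume "z \<in> M"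
  thus "(x + y - (pr M x + pr M y)) \<bullet> z = 0"
    using pr_orth[of z x] pr_orth[of z y]
    by (simp add: inner_diff_left inner_add_left algebra_simps)
qed

lemma pr_scale: "pr M (r *\<^sub>R x) = r *\<^sub>R pr M x"
proof (rule pr_unique)
  show "r *\<^sub>R pr M x \<in> M" using sub pr_in by (simp add: subspace_scale)
  fix z assume "z \<in> M"
  thus "(r *\<^sub>R x - r *\<^sub>R pr M x) \<bullet> z = 0"
    using pr_orth[of z x] by (simp add: scaleR_diff_right[symmetric] del: scaleR_diff_right)
qed

lemma pr_diff: "pr M (x - y) = pr M x - pr M y"
  using pr_add[of "x - y" y] by simp

lemma pr_norm: "norm (pr M x) \<le> norm x"
proof -
  have o: "pr M x \<bullet> (x - pr M x) = 0" using pr_orth[OF pr_in, of x] by (simp add: inner_commute)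
  have "(norm x)\<^sup>2 = (norm (pr M x + (x - pr M x)))\<^sup>2" by simp
  also have "\<dots> = (norm (pr M x))\<^sup>2 + (norm (x - pr M x))\<^sup>2"
    using o by (simp add: power2_norm_eq_inner inner_add_left inner_add_right inner_diff_left inner_diff_right inner_commute)
  finally have "(norm (pr M x))\<^sup>2 \<le> (norm x)\<^sup>2" by simp
  thus ?thesis by (rule power2_le_imp_le) simp
qed

lemma pr_sym: "pr M x \<bullet> y = x \<bullet> pr M y"
proof -
  have "pr M x \<bullet> y = pr M x \<bullet> pr M y + pr M x \<bullet> (y - pr M y)" by (simp add: inner_diff_right)
  also have "pr M x \<bullet> (y - pr M y) = 0" using pr_orth[OF pr_in, of y x] by (simp add: inner_commute)
  also have "x \<bullet> pr M y = pr M x \<bullet> pr M y + (x - pr M x) \<bullet> pr M y" by (simp add: inner_diff_left)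
  moreover have "(x - pr M x) \<bullet> pr M y = 0" using pr_orth[OF pr_in] by simp
  ultimately show ?thesis by simp
qed

lemma pr_idem: "pr M (pr M x) = pr M x" using pr_id pr_in by blast

lemma bounded_linear_pr: "bounded_linear (pr M)"
  by (rule bounded_linear_intro[where K=1]) (auto simp: pr_add pr_scale pr_norm)

end




lemma riesz:
  fixes \<phi> :: "'a::{real_inner,complete_space} \<Rightarrow> real"
  assumes bl: "bounded_linear \<phi>"
  shows "\<exists>z. \<forall>x. \<phi> x = x \<bullet> z"
proof (cases "\<forall>x. \<phi> x = 0")
  case True thus ?thesis by (intro exI[of _ 0]) simp
next
  case False
  then obtain x0 where x0: "\<phi> x0 \<noteq> 0" by blast
  interpret bounded_linear \<phi> by (rule bl)
  define K where "K = {x. \<phi> x = 0}"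
  have subK: "subspace K" unfolding K_def subspace_def by (simp add: add scale)
  have clK: "closed K" unfolding K_def using linear_continuous_on[OF bl]
    by (intro closed_Collect_eq) (auto intro: continuous_on_const)
  define w where "w = x0 - pr K x0"
  have "pr K x0 \<in> K" by (rule pr_in[OF subK clK])
  hence pw: "\<phi> w = \<phi> x0" unfolding w_def K_def by (simp add: diff)
  have worth: "w \<bullet> k = 0" if "k \<in> K" for k
    unfolding w_def using pr_orth[OF subK clK that] .
  have wne: "w \<bullet> w \<noteq> 0" using pw x0 by (auto simp: zero)
  show ?thesis
  proof (intro exI[of _ "(\<phi> w / (w \<bullet> w)) *\<^sub>R w"] allI)
    fix x
    have "x - (\<phi> x / \<phi> w) *\<^sub>R w \<in> K" unfolding K_def using pw x0 by (simp add: diff scale)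
    hence "w \<bullet> (x - (\<phi> x / \<phi> w) *\<^sub>R w) = 0" by (rule worth)
    hence "x \<bullet> w = (\<phi> x / \<phi> w) * (w \<bullet> w)" by (simp add: inner_diff_right inner_commute)
    thus "\<phi> x = x \<bullet> (\<phi> w / (w \<bullet> w)) *\<^sub>R w" using wne pw x0 by (simp add: field_simps)
  qed
qed

lemma adjoint_exists:
  fixes f :: "'a::{real_inner,complete_space} \<Rightarrow> 'a"
  assumes bl: "bounded_linear f"
  shows "f x \<bullet> y = x \<bullet> adjoint f y"
proof -
  have "\<forall>y. \<exists>z. \<forall>x. f x \<bullet> y = x \<bullet> z"
    using riesz[OF bounded_linear_compose[OF bounded_linear_inner_left bl]] by simp
  hence ex: "\<exists>g. \<forall>x y. f x \<bullet> y = x \<bullet> g y" by metis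
  show ?thesis unfolding adjoint_def using someI_ex[OF ex] by blast
qed

lemma selfadjoint_sym:
  fixes f :: "'a::{real_inner,complete_space} \<Rightarrow> 'a"
  assumes "bounded_linear f" "adjoint f = f"
  shows "f x \<bullet> y = x \<bullet> f y"
  using adjoint_exists[OF assms(1)] assms(2) by metis




lemma open_map_approx:
  fixes f :: "'a::{real_normed_vector,complete_space} \<Rightarrow> 'b::{real_normed_vector,complete_space}"
  assumes bl: "bounded_linear f" and cl: "closed (range f)"
  shows "\<exists>M\<ge>0. \<forall>y\<in>range f. \<forall>e>0. \<exists>x. norm x \<le> M * norm y \<and> norm (f x - y) < e"
proof -
  interpret bounded_linear f by (rule bl)
  define Y where "Y = range f"
  define X where "X = top_of_set Y"
  have cmX: "completely_metrizable_space X"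
    unfolding X_def using cl Y_def
    by (metis completely_metrizable_space_closedin completely_metrizable_space_euclidean closed_closedin)
  define F where "F k = Y \<inter> closure (f ` ball 0 (real k))" for k :: nat
  have "\<exists>k. X interior_of F k \<noteq> {}"
  proof (rule ccontr)
    assume "\<not> ?thesis"
    hence e: "\<And>k. X interior_of F k = {}" by blast
    have "X interior_of \<Union>(range F) = {}"
    proof (rule Baire_category_alt)
      show "completely_metrizable_space X \<or> locally_compact_space X \<and> regular_space X" using cmX by blast
      show "countable (range F)" by simp
      fix T assume "T \<in> range F"
      then obtain k where "T = F k" by blast
      thus "closedin X T \<and> X interior_of T = {}" using e
        unfolding X_def F_def by (simp add: closedin_closed_Int)
    qed
    moreover have "\<Union>(range F) = Y"
    proof
      show "\<Union>(range F) \<subseteq> Y" unfolding F_def by blast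
      show "Y \<subseteq> \<Union>(range F)"
      proof
        fix y assume "y \<in> Y"
        then obtain x where x: "y = f x" unfolding Y_def by blast
        obtain k :: nat where "norm x < real k" using reals_Archimedean2 by blast
        hence "y \<in> F k" unfolding F_def using \<open>y \<in> Y\<close> x closure_subset by fastforce
        thus "y \<in> \<Union>(range F)" by blast
      qed
    qed
    moreover have "topspace X = Y" unfolding X_def by simp
    moreover have "0 \<in> Y" unfolding Y_def using zero by (metis rangeI)
    ultimately show False by (metis empty_iff interior_of_topspace)
  qed
  then obtain k y0 where y0: "y0 \<in> X interior_of F k" by blast
  then obtain U where U: "openin X U" "y0 \<in> U" "U \<subseteq> F k" unfolding interior_of_def by blast
  then obtain r where r: "r > 0" "\<And>y. y \<in> Y \<Longrightarrow> dist y y0 < r \<Longrightarrow> y \<in> U"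
    unfolding X_def openin_euclidean_subtopology_iff by blast
  have y0Y: "y0 \<in> Y" using U unfolding F_def by blast
  have A2: "\<exists>x. norm x < 2 * real k \<and> norm (f x - y) < e" if yY: "y \<in> Y" and ny: "norm y < r" and e: "e > 0" for y e
  proof -
    have "y0 + y \<in> Y"
    proof -
      obtain a b where "y = f a" "y0 = f b" using yY y0Y unfolding Y_def by blast
      hence "y0 + y = f (b + a)" by (simp add: add)
      thus ?thesis unfolding Y_def by blast
    qed
    moreover have "dist (y0 + y) y0 < r" using ny by (simp add: dist_norm)
    ultimately have "y0 + y \<in> closure (f ` ball 0 (real k))" using r U unfolding F_def by blast
    then obtain x1 where x1: "norm x1 < real k" "dist (f x1) (y0 + y) < e/2"
      unfolding closure_approachable
    proof -
      assume h: "\<forall>\<epsilon>>0. \<exists>z\<in>f ` ball 0 (real k). dist z (y0 + y) < \<epsilon>"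
      obtain z where "z \<in> f ` ball 0 (real k)" "dist z (y0 + y) < e/2" using h e by (meson half_gt_zero)
      thus ?thesis using that by auto
    qed
    have "y0 \<in> closure (f ` ball 0 (real k))" using U unfolding F_def by blast
    then obtain x2 where x2: "norm x2 < real k" "dist (f x2) y0 < e/2"
      unfolding closure_approachable
    proof -
      assume h: "\<forall>\<epsilon>>0. \<exists>z\<in>f ` ball 0 (real k). dist z y0 < \<epsilon>"
      obtain z where "z \<in> f ` ball 0 (real k)" "dist z y0 < e/2" using h e by (meson half_gt_zero)
      thus ?thesis using that by auto
    qed
    have "norm (x1 - x2) \<le> norm x1 + norm x2" by (rule norm_triangle_ineq4)
    hence "norm (x1 - x2) < 2 * real k" using x1 x2 by simp
    moreover have "f (x1 - x2) - y = (f x1 - (y0 + y)) - (f x2 - y0)" by (simp add: diff)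
    hence "norm (f (x1 - x2) - y) \<le> norm (f x1 - (y0 + y)) + norm (f x2 - y0)"
      by (metis norm_triangle_ineq4)
    hence "norm (f (x1 - x2) - y) < e" using x1 x2 by (simp add: dist_norm)
    ultimately show ?thesis by blast
  qed
  define M where "M = 4 * real k / r"
  have M0: "M \<ge> 0" unfolding M_def using r by simp
  have "\<forall>y\<in>range f. \<forall>e>0. \<exists>x. norm x \<le> M * norm y \<and> norm (f x - y) < e"
  proof (intro ballI allI impI)
    fix y e assume yY: "y \<in> range f" and e: "(e::real) > 0"
    show "\<exists>x. norm x \<le> M * norm y \<and> norm (f x - y) < e"
    proof (cases "y = 0")
      case True thus ?thesis using e by (intro exI[of _ 0]) (simp add: zero)
    next
      case False
      hence ny: "norm y > 0" by simp
      define s where "s = r / (2 * norm y)"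
      have s0: "s > 0" unfolding s_def using r ny by simp
      have "s *\<^sub>R y \<in> Y"
      proof -
        obtain a where "y = f a" using yY by blast
        hence "s *\<^sub>R y = f (s *\<^sub>R a)" by (simp add: scale)
        thus ?thesis unfolding Y_def by blast
      qed
      moreover have "norm (s *\<^sub>R y) < r" using s0 ny r unfolding s_def by simp
      ultimately obtain x' where x': "norm x' < 2 * real k" "norm (f x' - s *\<^sub>R y) < e * s"
        using A2 e s0 by (meson mult_pos_pos)
      define x where "x = (1/s) *\<^sub>R x'"
      have "norm x = norm x' / s" unfolding x_def using s0 by simp
      also have "\<dots> \<le> 2 * real k / s" using x' s0 by (simp add: divide_right_mono)
      also have "\<dots> = M * norm y" unfolding M_def s_def using r ny by (simp add: field_simps)
      finally have 1: "norm x \<le> M * norm y" .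
      have "f x - y = (1/s) *\<^sub>R (f x' - s *\<^sub>R y)" unfolding x_def using s0
        by (simp add: scale algebra_simps)
      hence "norm (f x - y) = norm (f x' - s *\<^sub>R y) / s" using s0 by simp
      also have "\<dots> < e" using x' s0 by (simp add: divide_less_eq)
      finally show ?thesis using 1 by blast
    qed
  qed
  thus ?thesis using M0 by blast
qed




lemma open_map:
  fixes f :: "'a::{real_normed_vector,complete_space} \<Rightarrow> 'b::{real_normed_vector,complete_space}"
  assumes bl: "bounded_linear f" and cl: "closed (range f)"
  shows "\<exists>C. \<forall>y\<in>range f. \<exists>x. f x = y \<and> norm x \<le> C * norm y"
proof -
  interpret bounded_linear f by (rule bl)
  obtain M where M0: "M \<ge> 0" and M: "\<And>y e. y \<in> range f \<Longrightarrow> e > 0 \<Longrightarrow> \<exists>x. norm x \<le> M * norm y \<and> norm (f x - y) < e"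
    using open_map_approx[OF bl cl] by blast
  define g where "g e y = (SOME x. norm x \<le> M * norm y \<and> norm (f x - y) < e)" for e y
  have g: "\<And>y e. y \<in> range f \<Longrightarrow> e > 0 \<Longrightarrow> norm (g e y) \<le> M * norm y \<and> norm (f (g e y) - y) < e"
    unfolding g_def by (rule someI_ex, rule M)
  have "\<exists>x. f x = y \<and> norm x \<le> (2 * M) * norm y" if yY: "y \<in> range f" for y
  proof (cases "y = 0")
    case True thus ?thesis by (intro exI[of _ 0]) (simp add: zero)
  next
    case False
    hence ny: "norm y > 0" by simp
    define e where "e j = norm y / 2 ^ Suc j" for j :: nat
    have e0: "e j > 0" for j using ny by (simp add: e_def)
    define ys where "ys = rec_nat y (\<lambda>j z. z - f (g (e j) z))"
    have ys0: "ys 0 = y" and ysS: "ys (Suc j) = ys j - f (g (e j) (ys j))" for j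
      by (simp_all add: ys_def)
    have ysY: "ys j \<in> range f" for j
    proof (induction j)
      case 0 thus ?case using yY by (simp add: ys0)
    next
      case (Suc j)
      then obtain a where "ys j = f a" by blast
      hence "ys (Suc j) = f (a - g (e j) (ys j))" by (simp add: ysS diff)
      thus ?case by blast
    qed
    have ysn: "norm (ys j) \<le> norm y / 2 ^ j" for j
    proof (cases j)
      case 0 thus ?thesis by (simp add: ys0)
    next
      case (Suc i)
      have "norm (ys (Suc i)) = norm (f (g (e i) (ys i)) - ys i)" by (simp add: ysS norm_minus_commute)
      also have "\<dots> < e i" using g[OF ysY e0] by blast
      finally show ?thesis using Suc by (simp add: e_def)
    qed
    define xs where "xs j = g (e j) (ys j)" for j
    have xsn: "norm (xs j) \<le> M * norm y * (1/2) ^ j" for j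
    proof -
      have "norm (xs j) \<le> M * norm (ys j)" unfolding xs_def using g[OF ysY e0] by blast
      also have "\<dots> \<le> M * (norm y / 2 ^ j)" using M0 ysn[of j] by (rule mult_left_mono[rotated])
      finally show ?thesis by (simp add: power_one_over)
    qed
    have sg: "summable (\<lambda>j. M * norm y * (1/2::real) ^ j)"
      by (intro summable_mult summable_geometric) simp
    have snx: "summable (\<lambda>j. norm (xs j))"
      by (rule summable_comparison_test[OF _ sg]) (use xsn in simp)
    have sx: "summable xs" by (rule my_summable_norm_cancel[OF snx])
    define x where "x = suminf xs"
    have fx: "f x = (\<Sum>j. f (xs j))" unfolding x_def by (rule suminf[OF sx])
    have fxs: "f (xs j) = ys j - ys (Suc j)" for j by (simp add: xs_def ysS)
    have lim: "ys \<longlonglongrightarrow> 0"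
    proof (rule Lim_null_comparison[where g="\<lambda>j. norm y * (1/2::real) ^ j"])
      show "\<forall>\<^sub>F j in sequentially. norm (ys j) \<le> norm y * (1 / 2) ^ j"
        using ysn by (simp add: power_one_over)
      show "(\<lambda>j. norm y * (1 / 2::real) ^ j) \<longlonglongrightarrow> 0"
        by (intro tendsto_mult_right_zero LIMSEQ_power_zero) simp
    qed
    have "(\<lambda>j. ys j - ys (Suc j)) sums (ys 0 - 0)" by (rule telescope_sums'[OF lim])
    hence "f x = y" using fx fxs ys0 by (simp add: sums_iff)
    moreover have "norm x \<le> 2 * M * norm y"
    proof -
      have "norm x \<le> (\<Sum>j. norm (xs j))" unfolding x_def by (rule my_summable_norm[OF snx])
      also have "\<dots> \<le> (\<Sum>j. M * norm y * (1/2::real) ^ j)"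
        by (rule suminf_le[OF xsn snx sg])
      also have "\<dots> = M * norm y * 2" by (simp add: suminf_mult suminf_geometric)
      finally show ?thesis by simp
    qed
    ultimately show ?thesis by blast
  qed
  thus ?thesis by blast
qed





lemma linear_funpow:
  fixes f :: "'a::real_vector \<Rightarrow> 'a"
  shows "linear f \<Longrightarrow> linear (f ^^ n)"
proof (induction n)
  case 0 show ?case unfolding funpow.simps(1) by (rule linear_id)
next
  case (Suc n)
  then have ln: "linear (f ^^ n)" by blast
  show ?case unfolding funpow.simps(2) by (rule linear_compose[OF ln Suc.prems])
qed

lemma mp_exists:
  fixes T :: "'a::{real_inner,complete_space} \<Rightarrow>\<^sub>L 'a"
  assumes cl: "closed (range (blinfun_apply T))"
  shows "\<exists>S. is_mp_inverse T S"
proof -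
  have blT: "bounded_linear (blinfun_apply T)" by (rule blinfun.bounded_linear_right)
  define N where "N = {x. T x = 0}"
  define R where "R = range (blinfun_apply T)"
  have subN: "subspace N" unfolding N_def subspace_def by (simp add: blinfun.add_right blinfun.scaleR_right)
  have clN: "closed N" unfolding N_def using linear_continuous_on[OF blT]
    by (intro closed_Collect_eq) (auto intro: continuous_on_const)
  have subR: "subspace R" unfolding R_def
  proof -
    have z0: "0 \<in> range (blinfun_apply T)" by (metis blinfun.zero_right rangeI)
    have ad: "x + y \<in> range (blinfun_apply T)" if xy: "x \<in> range (blinfun_apply T)" "y \<in> range (blinfun_apply T)" for x y
    proof -
      obtain a b where "x = T a" "y = T b" using xy by blast
      hence "x + y = T (a + b)" by (simp add: blinfun.add_right)
      thus ?thesis by blast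
    qed
    have sc: "c *\<^sub>R x \<in> range (blinfun_apply T)" if xr: "x \<in> range (blinfun_apply T)" for x c
    proof -
      obtain a where "x = T a" using xr by blast
      hence "c *\<^sub>R x = T (c *\<^sub>R a)" by (simp add: blinfun.scaleR_right)
      thus ?thesis by blast
    qed
    show "subspace (range (blinfun_apply T))" unfolding subspace_def
      by (intro conjI ballI allI z0 ad sc)
  qed
  have clR: "closed R" using cl by (simp add: R_def)
  define Q where "Q x = x - pr N x" for x
  have TQ: "T (Q x) = T x" for x
    using pr_in[OF subN clN, of x] unfolding Q_def N_def by (simp add: blinfun.diff_right)
  have QN: "k \<in> N \<Longrightarrow> Q k = 0" for k unfolding Q_def using pr_id[OF subN clN] by simp
  have Qadd: "Q (a + b) = Q a + Q b" for a b unfolding Q_def using pr_add[OF subN clN] by simp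
  have Qscale: "Q (r *\<^sub>R a) = r *\<^sub>R Q a" for r a unfolding Q_def using pr_scale[OF subN clN]
    by (simp add: scaleR_diff_right)
  have Qdiff: "Q (a - b) = Q a - Q b" for a b using Qadd[of "a - b" b] by simp
  have Qnorm: "norm (Q x) \<le> 2 * norm x" for x
  proof -
    have "norm (Q x) \<le> norm x + norm (pr N x)" unfolding Q_def by (rule norm_triangle_ineq4)
    thus ?thesis using pr_norm[OF subN clN, of x] by simp
  qed
  have Qsym: "Q x \<bullet> y = x \<bullet> Q y" for x y
    unfolding Q_def using pr_sym[OF subN clN, of x y] by (simp add: inner_diff_left inner_diff_right)
  have QQ: "Q (Q x) = Q x" for x
  proof -
    have "pr N (Q x) = 0" unfolding Q_def using pr_diff[OF subN clN] pr_idem[OF subN clN] by simp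
    thus ?thesis by (simp add: Q_def[of "Q x"])
  qed
  define P where "P = pr R"
  have PT: "P (T x) = T x" for x unfolding P_def by (rule pr_id[OF subR clR]) (simp add: R_def)
  have PR: "P y \<in> R" for y unfolding P_def by (rule pr_in[OF subR clR])
  obtain C where C: "\<And>y. y \<in> R \<Longrightarrow> \<exists>x. T x = y \<and> norm x \<le> C * norm y"
    using open_map[OF blT cl] unfolding R_def by blast
  define pre where "pre y = (SOME x. T x = P y \<and> norm x \<le> C * norm (P y))" for y
  have pre: "T (pre y) = P y \<and> norm (pre y) \<le> C * norm (P y)" for y
    unfolding pre_def by (rule someI_ex, rule C, rule PR)
  define S0 where "S0 y = Q (pre y)" for y
  have TS0: "T (S0 y) = P y" for y unfolding S0_def TQ using pre by blast
  have S0add: "S0 (a + b) = S0 a + S0 b" for a b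
  proof -
    have "pre (a + b) - pre a - pre b \<in> N" unfolding N_def
      using pre[of "a+b"] pre[of a] pre[of b] pr_add[OF subR clR, of a b]
      by (simp add: blinfun.diff_right P_def)
    hence "Q (pre (a + b) - pre a - pre b) = 0" by (rule QN)
    thus ?thesis unfolding S0_def by (simp add: Qdiff Qadd algebra_simps)
  qed
  have S0scale: "S0 (r *\<^sub>R a) = r *\<^sub>R S0 a" for r a
  proof -
    have "pre (r *\<^sub>R a) - r *\<^sub>R pre a \<in> N" unfolding N_def
      using pre[of "r *\<^sub>R a"] pre[of a] pr_scale[OF subR clR, of r a]
      by (simp add: blinfun.diff_right blinfun.scaleR_right P_def)
    hence "Q (pre (r *\<^sub>R a) - r *\<^sub>R pre a) = 0" by (rule QN)
    thus ?thesis unfolding S0_def by (simp add: Qdiff Qscale)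
  qed
  have S0norm: "norm (S0 y) \<le> norm y * (2 * \<bar>C\<bar>)" for y
  proof -
    have "norm (S0 y) \<le> 2 * norm (pre y)" unfolding S0_def by (rule Qnorm)
    also have "norm (pre y) \<le> C * norm (P y)" using pre by blast
    also have "C * norm (P y) \<le> \<bar>C\<bar> * norm (P y)" by (simp add: mult_right_mono)
    also have "\<bar>C\<bar> * norm (P y) \<le> \<bar>C\<bar> * norm y"
      using pr_norm[OF subR clR, of y] unfolding P_def by (simp add: mult_left_mono)
    finally show ?thesis by (simp add: algebra_simps)
  qed
  have blS0: "bounded_linear S0"
    by (rule bounded_linear_intro[OF S0add S0scale S0norm])
  define S where "S = Blinfun S0"
  have Sapp: "blinfun_apply S = S0" unfolding S_def by (rule bounded_linear_Blinfun_apply[OF blS0])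
  have ST: "S0 (T x) = Q x" for x
  proof -
    have "pre (T x) - x \<in> N" unfolding N_def using pre[of "T x"] PT[of x]
      by (simp add: blinfun.diff_right)
    hence "Q (pre (T x) - x) = 0" by (rule QN)
    thus ?thesis unfolding S0_def by (simp add: Qdiff)
  qed
  have e1: "T o\<^sub>L S o\<^sub>L T = T"
    by (rule blinfun_eqI) (simp add: Sapp TS0 PT)
  have e2: "S o\<^sub>L T o\<^sub>L S = S"
  proof (rule blinfun_eqI)
    fix i
    have "S0 (T (S0 i)) = S0 i" by (simp only: ST) (simp add: S0_def QQ)
    thus "blinfun_apply (S o\<^sub>L T o\<^sub>L S) i = blinfun_apply S i" by (simp add: Sapp)
  qed
  have f3: "blinfun_apply (S o\<^sub>L T) = Q" by (rule ext) (simp add: Sapp ST)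
  have f4: "blinfun_apply (T o\<^sub>L S) = P" by (rule ext) (simp add: Sapp TS0)
  have e3: "adjoint (blinfun_apply (S o\<^sub>L T)) = blinfun_apply (S o\<^sub>L T)"
    unfolding f3 by (rule adjoint_unique) (simp add: Qsym)
  have e4: "adjoint (blinfun_apply (T o\<^sub>L S)) = blinfun_apply (T o\<^sub>L S)"
    unfolding f4 P_def by (rule adjoint_unique) (simp add: pr_sym[OF subR clR])
  show ?thesis unfolding is_mp_inverse_def using e1 e2 e3 e4 by blast
qed

lemma inner_eqI:
  fixes a b :: "'a::real_inner"
  assumes "\<And>y. a \<bullet> y = b \<bullet> y"
  shows "a = b"
proof -
  have "(a - b) \<bullet> (a - b) = 0" using assms[of "a - b"] by (simp add: inner_diff_left)
  thus ?thesis by simp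
qed

lemma mp_unique:
  fixes T :: "'a::{real_inner,complete_space} \<Rightarrow>\<^sub>L 'a"
  assumes h1: "is_mp_inverse T S1" and h2: "is_mp_inverse T S2"
  shows "S1 = S2"
proof -
  have s1: "S1 (T x) \<bullet> y = x \<bullet> S1 (T y)" for x y
    using selfadjoint_sym[OF blinfun.bounded_linear_right h1[unfolded is_mp_inverse_def, THEN conjunct2, THEN conjunct2, THEN conjunct1]]
    by simp
  have s2: "S2 (T x) \<bullet> y = x \<bullet> S2 (T y)" for x y
    using selfadjoint_sym[OF blinfun.bounded_linear_right h2[unfolded is_mp_inverse_def, THEN conjunct2, THEN conjunct2, THEN conjunct1]]
    by simp
  have t1: "T (S1 x) \<bullet> y = x \<bullet> T (S1 y)" for x y
    using selfadjoint_sym[OF blinfun.bounded_linear_right h1[unfolded is_mp_inverse_def, THEN conjunct2, THEN conjunct2, THEN conjunct2]]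
    by simp
  have t2: "T (S2 x) \<bullet> y = x \<bullet> T (S2 y)" for x y
    using selfadjoint_sym[OF blinfun.bounded_linear_right h2[unfolded is_mp_inverse_def, THEN conjunct2, THEN conjunct2, THEN conjunct2]]
    by simp
  have a1: "T (S1 (T x)) = T x" for x using h1 unfolding is_mp_inverse_def
    by (metis blinfun_apply_blinfun_compose)
  have a2: "T (S2 (T x)) = T x" for x using h2 unfolding is_mp_inverse_def
    by (metis blinfun_apply_blinfun_compose)
  have b1: "S1 (T (S1 x)) = S1 x" for x using h1 unfolding is_mp_inverse_def
    by (metis blinfun_apply_blinfun_compose)
  have b2: "S2 (T (S2 x)) = S2 x" for x using h2 unfolding is_mp_inverse_def
    by (metis blinfun_apply_blinfun_compose)
  have ST: "S1 (T x) = S2 (T x)" for x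
  proof (rule inner_eqI)
    fix y
    have "S1 (T x) \<bullet> y = S1 (T (S2 (T x))) \<bullet> y" by (simp add: a2)
    also have "\<dots> = S2 (T x) \<bullet> S1 (T y)" by (rule s1)
    also have "\<dots> = S2 (T (S2 (T x))) \<bullet> S1 (T y)" by (simp add: a2)
    also have "\<dots> = S2 (T x) \<bullet> S2 (T (S1 (T y)))" by (rule s2)
    also have "\<dots> = S2 (T x) \<bullet> S2 (T y)" by (simp add: a1)
    also have "\<dots> = S2 (T (S2 (T x))) \<bullet> y" by (rule s2[symmetric])
    also have "\<dots> = S2 (T x) \<bullet> y" by (simp add: a2)
    finally show "S1 (T x) \<bullet> y = S2 (T x) \<bullet> y" .
  qed
  have TS: "T (S1 x) = T (S2 x)" for x
  proof (rule inner_eqI)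
    fix y
    have "T (S1 x) \<bullet> y = T (S2 (T (S1 x))) \<bullet> y" by (simp add: a2)
    also have "\<dots> = T (S1 x) \<bullet> T (S2 y)" by (rule t2)
    also have "\<dots> = x \<bullet> T (S1 (T (S2 y)))" by (rule t1)
    also have "\<dots> = x \<bullet> T (S2 y)" by (simp add: a1)
    also have "\<dots> = T (S2 x) \<bullet> y" by (rule t2[symmetric])
    finally show "T (S1 x) \<bullet> y = T (S2 x) \<bullet> y" .
  qed
  have "S1 x = S2 x" for x
  proof -
    have "S1 x = S1 (T (S1 x))" by (simp add: b1)
    also have "\<dots> = S2 (T (S1 x))" by (rule ST)
    also have "\<dots> = S2 (T (S2 x))" by (simp add: TS)
    also have "\<dots> = S2 x" by (rule b2)
    finally show ?thesis .
  qed
  thus ?thesis by (intro blinfun_eqI)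
qed

lemma mp_inverse_is:
  fixes T :: "'a::{real_inner,complete_space} \<Rightarrow>\<^sub>L 'a"
  assumes cl: "closed (range (blinfun_apply T))"
  shows "is_mp_inverse T (mp_inverse T)"
proof -
  obtain S where S: "is_mp_inverse T S" using mp_exists[OF cl] by blast
  show ?thesis unfolding mp_inverse_def
    by (rule theI[where P="is_mp_inverse T", OF S]) (rule mp_unique[OF _ S])
qed




theorem mainTheorem19:
  fixes T :: "'a::{real_inner, complete_space} \<Rightarrow>\<^sub>L 'a" and n :: nat
  assumes "n \<ge> 1" and "n_EP n T"
  shows "ascent T \<noteq> \<infinity> \<and> descent T \<noteq> \<infinity> \<and> ascent T \<le> enat n \<and> descent T \<le> enat n"
proof -
  have cl: "closed (range (blinfun_apply T))" and
    comm: "op_pow T n \<circ> blinfun_apply (mp_inverse T) = blinfun_apply (mp_inverse T) \<circ> op_pow T n"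
    using assms(2) unfolding n_EP_def by blast+
  define S where "S = mp_inverse T"
  have mp: "is_mp_inverse T S" unfolding S_def by (rule mp_inverse_is[OF cl])
  have TST: "T (S (T x)) = T x" for x using mp unfolding is_mp_inverse_def
    by (metis blinfun_apply_blinfun_compose)
  obtain m where nm: "n = Suc m" using assms(1) by (cases n) auto
  have linT: "linear (blinfun_apply T)" by (rule bounded_linear.linear[OF blinfun.bounded_linear_right])
  have linS: "linear (blinfun_apply S)" by (rule bounded_linear.linear[OF blinfun.bounded_linear_right])
  have lin: "linear (blinfun_apply T ^^ k)" for k by (rule linear_funpow[OF linT])
  have cm: "(blinfun_apply T ^^ n) (S x) = S ((blinfun_apply T ^^ n) x)" for x
    using fun_cong[OF comm, of x] unfolding S_def op_pow_def by simp
  have sucL: "(blinfun_apply T ^^ Suc k) x = T ((blinfun_apply T ^^ k) x)" for k x by simp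
  have sucR: "(blinfun_apply T ^^ Suc k) x = (blinfun_apply T ^^ k) (T x)" for k x
    by (simp add: funpow_Suc_right del: funpow.simps)
  have ker: "kernel_op (op_pow T n) = kernel_op (op_pow T (Suc n))"
  proof
    show "kernel_op (op_pow T n) \<subseteq> kernel_op (op_pow T (Suc n))"
      unfolding kernel_op_def op_pow_def by (auto simp: blinfun.zero_right)
    show "kernel_op (op_pow T (Suc n)) \<subseteq> kernel_op (op_pow T n)"
    proof
      fix x assume "x \<in> kernel_op (op_pow T (Suc n))"
      hence x0: "(blinfun_apply T ^^ Suc n) x = 0" unfolding kernel_op_def op_pow_def by simp
      have "(blinfun_apply T ^^ n) x = (blinfun_apply T ^^ n) (S (T x)) + (blinfun_apply T ^^ n) (x - S (T x))"
        using linear_add[OF lin[of n], of "S (T x)" "x - S (T x)"] by simp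
      also have "(blinfun_apply T ^^ n) (x - S (T x)) = 0"
      proof -
        have "(blinfun_apply T ^^ n) (x - S (T x)) = (blinfun_apply T ^^ m) (T (x - S (T x)))"
          unfolding nm by (rule sucR)
        also have "T (x - S (T x)) = 0" by (simp add: blinfun.diff_right TST)
        finally show ?thesis using linear_0[OF lin[of m]] by simp
      qed
      also have "(blinfun_apply T ^^ n) (S (T x)) = 0"
      proof -
        have "(blinfun_apply T ^^ n) (S (T x)) = S ((blinfun_apply T ^^ n) (T x))" by (rule cm)
        also have "(blinfun_apply T ^^ n) (T x) = 0" using x0 sucR[of n x] by simp
        finally show ?thesis by (simp add: blinfun.zero_right)
      qed
      finally show "x \<in> kernel_op (op_pow T n)" unfolding kernel_op_def op_pow_def by simp
    qed
  qed
  have rng: "range (op_pow T n) = range (op_pow T (Suc n))"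
  proof
    show "range (op_pow T (Suc n)) \<subseteq> range (op_pow T n)"
      unfolding op_pow_def using sucR by (metis image_subset_iff rangeI)
    show "range (op_pow T n) \<subseteq> range (op_pow T (Suc n))"
    proof
      fix y assume "y \<in> range (op_pow T n)"
      then obtain x where y: "y = (blinfun_apply T ^^ n) x" unfolding op_pow_def by blast
      have "(blinfun_apply T ^^ Suc n) (S x) = T ((blinfun_apply T ^^ n) (S x))" by (rule sucL)
      also have "\<dots> = T (S ((blinfun_apply T ^^ n) x))" by (simp add: cm)
      also have "(blinfun_apply T ^^ n) x = T ((blinfun_apply T ^^ m) x)" unfolding nm by (rule sucL)
      also have "T (S (T ((blinfun_apply T ^^ m) x))) = T ((blinfun_apply T ^^ m) x)" by (rule TST)
      also have "T ((blinfun_apply T ^^ m) x) = y" using y nm by simp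
      finally show "y \<in> range (op_pow T (Suc n))" unfolding op_pow_def by (metis rangeI)
    qed
  qed
  have a: "ascent T = enat (LEAST k. kernel_op (op_pow T k) = kernel_op (op_pow T (Suc k)))"
    unfolding ascent_def using ker by auto
  have a2: "(LEAST k. kernel_op (op_pow T k) = kernel_op (op_pow T (Suc k))) \<le> n"
    by (rule Least_le) (rule ker)
  have d: "descent T = enat (LEAST k. range (op_pow T k) = range (op_pow T (Suc k)))"
    unfolding descent_def using rng by auto
  have d2: "(LEAST k. range (op_pow T k) = range (op_pow T (Suc k))) \<le> n"
    by (rule Least_le) (rule rng)
  show ?thesis using a a2 d d2 by simp
qed


end
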